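(* Let $\rho\in(0,1)\cup(1,\infty)$, $\xi\in\mathbb{R}$, and $H=\frac{1}{2(1+\rho\sinh^2\chi)}\big(\cosh^2\chi P_\chi^2+\frac{P_\phi^2}{\tanh^2\chi}+\xi\sinh^2\chi\big)$ on $(\chi,\phi)\in(0,\infty)\times\mathbb{S}^1$. Suppose the level set $H=E$, $P_\phi=L>0$ is nonempty, and set $\sigma=2(\rho-1)E-\xi$. Then $\sigma\le0\Rightarrow E>0$, and $\xi-2\rho E\ge0\Rightarrow E>0$. *)

theory Defs
  imports Complex_Main
begin

definition Ham :: "real \<Rightarrow> real \<Rightarrow> real \<Rightarrow> real \<Rightarrow> real \<Rightarrow> real \<Rightarrow> real" where
  "Ham \<rho> \<xi> \<chi> \<phi> P\<chi> P\<phi> =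
     (cosh \<chi> ^ 2 * P\<chi> ^ 2 + P\<phi> ^ 2 / tanh \<chi> ^ 2 + \<xi> * sinh \<chi> ^ 2)
     / (2 * (1 + \<rho> * sinh \<chi> ^ 2))"

end

theory Submission
  imports Defs
begin

theorem lemma11:
  fixes \<rho> \<xi> E L :: real
  assumes "\<rho> > 0" and "\<rho> \<noteq> 1" and "L > 0"
    and "\<exists>\<chi> \<phi> P\<chi>. \<chi> > 0 \<and> Ham \<rho> \<xi> \<chi> \<phi> P\<chi> L = E"
  shows "(2 * (\<rho> - 1) * E - \<xi> \<le> 0 \<longrightarrow> E > 0) \<and> (\<xi> - 2 * \<rho> * E \<ge> 0 \<longrightarrow> E > 0)"
proof -
  obtain \<chi> \<phi> P where h: "\<chi> > 0" "Ham \<rho> \<xi> \<chi> \<phi> P L = E" using assms(4) by blast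
  define s where "s = sinh \<chi> ^ 2"
  have sp: "sinh \<chi> > 0" using h(1) by simp
  have s0: "s > 0" using sp unfolding s_def by simp
  have cp: "cosh \<chi> > 0" by simp
  have tp: "tanh \<chi> > 0" using h(1) by simp
  define X where "X = L ^ 2 / tanh \<chi> ^ 2"
  have X0: "X > 0" unfolding X_def using tp assms(3) by simp
  define Y where "Y = cosh \<chi> ^ 2 * P ^ 2"
  have Y0: "Y \<ge> 0" unfolding Y_def by simp
  have d0: "1 + \<rho> * s > 0" using assms(1) s0 by (simp add: add_pos_pos)
  have eq: "2 * (1 + \<rho> * s) * E = Y + X + \<xi> * s"
    using h(2) d0 unfolding Ham_def Y_def X_def s_def by (simp add: field_simps)
  show ?thesis
  proof (intro conjI impI)
    assume a: "2 * (\<rho> - 1) * E - \<xi> \<le> 0"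
    have "\<xi> * s \<ge> 2 * (\<rho> - 1) * E * s" using a s0 by (simp add: mult_right_mono)
    hence "2 * E * (1 + s) > 0" using eq X0 Y0 by (simp add: algebra_simps)
    thus "E > 0" using s0 by (simp add: zero_less_mult_iff)
  next
    assume a: "\<xi> - 2 * \<rho> * E \<ge> 0"
    have "\<xi> * s \<ge> 2 * \<rho> * E * s" using a s0 by (simp add: mult_right_mono)
    hence "2 * E > 0" using eq X0 Y0 by (simp add: algebra_simps)
    thus "E > 0" by simp
  qed
qed

end
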